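(* Suppose (A.1) $\nabla f$ is Lipschitz continuous on $\mathbb{R}^n$ with modulus $L>0$ and (A.3) there are $\mu_f\in\mathbb{R}$, $\mu_r\ge0$ with $\bar\mu:=\mu_f+\mu_r>0$ such that $f-\frac{\mu_f}{2}\|\cdot\|^2$ and $r-\frac{\mu_r}{2}\|\cdot\|^2$ are convex. Let $\Lambda\in\mathbb S^n_{++}$ with $\lambda_MI\succeq\Lambda\succeq\lambda_mI$, and let $x^*$ be the unique minimizer of $\psi=f+r$. For $\tau>0$ set $$b_1:=L-2\lambda_m-\mu_r,\quad b_2:=\frac{(\lambda_M+\mu_r)^2}{\bar\mu},\quad B_1(\tau):=\frac{1+\tau}{\bar\mu}\big(\sqrt{b_1+b_2+\tau}+\sqrt{b_2}\big)^2.$$ Then for each $\tau>0$ there is a constant $B_2(\tau)>0$ (depending only on $\tau$ and on $L,\mu_f,\mu_r,\lambda_m,\lambda_M$) such that for all $x\in\mathbb{R}^n$ and every sample mini-batch $s$, $$\|x-x^*\|^2\le B_1(\tau)\|F^\Lambda_s(x)\|^2+B_2(\tau)\|\nabla f(x)-G_s(x)\|^2.$$ If the exact gradient is used (i.e. $G_s\equiv\nabla f$), then $\|x-x^*\|^2\le B_1(0)\|F^\Lambda(x)\|^2$ for all $x$.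
   Context: $f:\mathbb{R}^n\to\mathbb{R}$ continuously differentiable, $r:\mathbb{R}^n\to(-\infty,+\infty]$ convex, lsc, proper, $\psi:=f+r$. For $\Lambda\in\mathbb S^n_{++}$, $\|x\|_\Lambda^2=\langle x,\Lambda x\rangle$, $\mathrm{prox}^\Lambda_r(x):=\arg\min_y r(y)+\frac12\|x-y\|_\Lambda^2$, $F^\Lambda(x):=x-\mathrm{prox}^\Lambda_r(x-\Lambda^{-1}\nabla f(x))$. A sample mini-batch $s$ yields a stochastic gradient $G_s(x)\in\mathbb{R}^n$ (e.g. $G_s(x)=\frac1m\sum_i\mathcal G(x,s_i)$ for an oracle $\mathcal G$), and $F^\Lambda_s(x):=x-\mathrm{prox}^\Lambda_r(x-\Lambda^{-1}G_s(x))$. Note that $b_1+b_2\ge0$ under the assumptions. *)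

theory Defs
  imports "HOL-Analysis.Analysis"
begin

definition lnorm2 :: "real^'n^'n \<Rightarrow> real^'n \<Rightarrow> real" where
  "lnorm2 Lam x = x \<bullet> (Lam *v x)"

definition spd :: "real^'n^'n \<Rightarrow> bool" where
  "spd Lam \<longleftrightarrow> transpose Lam = Lam \<and> (\<forall>x. x \<noteq> 0 \<longrightarrow> 0 < lnorm2 Lam x)"

text \<open>An extended-valued function that equals r on its effective domain D and +infinity
  outside is proper, convex and lower semicontinuous (closed epigraph).\<close>
definition proper_convex_lsc :: "('a::real_normed_vector \<Rightarrow> real) \<Rightarrow> 'a set \<Rightarrow> bool" where
  "proper_convex_lsc r D \<longleftrightarrow> D \<noteq> {} \<and> convex D \<and> convex_on D r
     \<and> closed {(x, t). x \<in> D \<and> r x \<le> t}"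

definition prox :: "real^'n^'n \<Rightarrow> (real^'n \<Rightarrow> real) \<Rightarrow> (real^'n) set \<Rightarrow> real^'n \<Rightarrow> real^'n" where
  "prox Lam r D x = (SOME y. y \<in> D \<and>
     (\<forall>z\<in>D. r y + lnorm2 Lam (x - y) / 2 \<le> r z + lnorm2 Lam (x - z) / 2))"

definition Fres :: "real^'n^'n \<Rightarrow> (real^'n \<Rightarrow> real) \<Rightarrow> (real^'n) set \<Rightarrow> real^'n \<Rightarrow> real^'n \<Rightarrow> real^'n" where
  "Fres Lam r D g x = x - prox Lam r D (x - matrix_inv Lam *v g)"

end

theory Submission
  imports Defs
begin


lemma symdot:
  fixes Lam :: "real^'n^'n"
  assumes "transpose Lam = Lam"
  shows "(Lam *v u) \<bullet> v = u \<bullet> (Lam *v v)"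
proof -
  have "v v* Lam = Lam *v v" using vector_transpose_matrix[of v Lam] assms by simp
  then have "(Lam *v v) \<bullet> u = v \<bullet> (Lam *v u)" using dot_lmul_matrix[of v Lam u] by simp
  then show ?thesis by (simp add: inner_commute)
qed

lemma lnorm2_expand:
  fixes Lam :: "real^'n^'n"
  assumes "transpose Lam = Lam"
  shows "lnorm2 Lam (a - t *\<^sub>R b) = lnorm2 Lam a - 2*t*((Lam *v a) \<bullet> b) + t^2 * lnorm2 Lam b"
proof -
  have s: "a \<bullet> (Lam *v b) = (Lam *v a) \<bullet> b" using symdot[OF assms] by simp
  show ?thesis unfolding lnorm2_def
    by (simp add: algebra_simps matrix_vector_mult_scaleR inner_diff_left inner_diff_right s power2_eq_square inner_commute)
qed

lemma lnorm2_scale: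
  fixes Lam :: "real^'n^'n"
  shows "lnorm2 Lam (t *\<^sub>R b) = t^2 * lnorm2 Lam b"
  unfolding lnorm2_def by (simp add: matrix_vector_mult_scaleR power2_eq_square)

lemma lnorm2_cs:
  fixes Lam :: "real^'n^'n"
  assumes sym: "transpose Lam = Lam" and pos: "\<And>x. lnorm2 Lam x \<ge> 0"
    and up: "\<And>x. lnorm2 Lam x \<le> lM * (norm x)\<^sup>2" and lM: "lM \<ge> 0"
  shows "(Lam *v u) \<bullet> v \<le> lM * norm u * norm v"
proof (cases "u = 0 \<or> v = 0")
  case True then show ?thesis by auto
next
  case False
  then have nu: "norm u > 0" and nv: "norm v > 0" by auto
  have key: "4 * ((Lam *v u) \<bullet> v) \<le> lM * (a^2 * (norm u)^2 + 2 * (u \<bullet> v) + (norm v)^2 / a^2)"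
    if a: "a > 0" for a
  proof -
    have s: "u \<bullet> (Lam *v v) = (Lam *v u) \<bullet> v" using symdot[OF sym] by simp
    have e: "lnorm2 Lam (a *\<^sub>R u + (1/a) *\<^sub>R v) - lnorm2 Lam (a *\<^sub>R u - (1/a) *\<^sub>R v) = 4 * ((Lam *v u) \<bullet> v)"
      unfolding lnorm2_def using a
      by (simp add: algebra_simps matrix_vector_mult_scaleR inner_diff_left inner_diff_right inner_add_left inner_add_right s inner_commute)
    have n: "(norm (a *\<^sub>R u + (1/a) *\<^sub>R v))^2 = a^2 * (norm u)^2 + 2 * (u \<bullet> v) + (norm v)^2 / a^2"
    proof -
      have "(norm (a *\<^sub>R u + (1/a) *\<^sub>R v))^2 = (a *\<^sub>R u) \<bullet> (a *\<^sub>R u) + 2 * ((a *\<^sub>R u) \<bullet> ((1/a) *\<^sub>R v)) + ((1/a) *\<^sub>R v) \<bullet> ((1/a) *\<^sub>R v)"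
        by (simp only: power2_norm_eq_inner inner_add_left inner_add_right inner_commute)
      also have "\<dots> = a^2 * (u \<bullet> u) + 2 * (u \<bullet> v) + (v \<bullet> v) / a^2"
        using a by (simp add: power2_eq_square)
      finally show ?thesis by (simp add: power2_norm_eq_inner)
    qed
    have "lnorm2 Lam (a *\<^sub>R u + (1/a) *\<^sub>R v) \<le> lM * (a^2 * (norm u)^2 + 2 * (u \<bullet> v) + (norm v)^2 / a^2)"
      using n up[of "a *\<^sub>R u + (1/a) *\<^sub>R v"] by simp
    then show ?thesis using e pos[of "a *\<^sub>R u - (1/a) *\<^sub>R v"] by linarith
  qed
  define a where "a = sqrt (norm v / norm u)"
  have a0: "a > 0" using nu nv by (simp add: a_def)
  have a2: "a^2 = norm v / norm u" using nu nv by (simp add: a_def)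
  have "a^2 * (norm u)^2 = norm u * norm v" using a2 nu by (simp add: power2_eq_square field_simps)
  moreover have "(norm v)^2 / a^2 = norm u * norm v" using a2 nu nv by (simp add: power2_eq_square)
  moreover have "u \<bullet> v \<le> norm u * norm v" by (simp add: norm_cauchy_schwarz)
  ultimately have "4 * ((Lam *v u) \<bullet> v) \<le> lM * (4 * (norm u * norm v))"
    using key[OF a0] lM by (smt (verit) mult_left_mono)
  then show ?thesis by simp
qed

lemma lnorm2_cont: "continuous_on S (lnorm2 (Lam::real^'n^'n))"
proof -
  have "continuous_on S (\<lambda>x. x \<bullet> (Lam *v x))"
    by (intro continuous_intros continuous_on_compose2[OF matrix_vector_mult_linear_continuous_on[of UNIV Lam]]) auto
  then show ?thesis unfolding lnorm2_def[abs_def] .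
qed

lemma spd_lower:
  fixes Lam :: "real^'n^'n"
  assumes "spd Lam"
  shows "\<exists>lam>0. \<forall>x. lam * (norm x)^2 \<le> lnorm2 Lam x"
proof -
  have ne: "sphere (0::real^'n) 1 \<noteq> {}"
    using norm_axis_1[of undefined] by (metis mem_sphere_0 empty_iff)
  obtain x0 where x0: "x0 \<in> sphere (0::real^'n) 1" and mn: "\<forall>y\<in>sphere 0 1. lnorm2 Lam x0 \<le> lnorm2 Lam y"
    using continuous_attains_inf[OF compact_sphere ne lnorm2_cont] by blast
  have "x0 \<noteq> 0" using x0 by auto
  then have pos: "lnorm2 Lam x0 > 0" using assms unfolding spd_def by auto
  have "lnorm2 Lam x0 * (norm x)^2 \<le> lnorm2 Lam x" for x
  proof (cases "x = 0")
    case True then show ?thesis by (simp add: lnorm2_def)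
  next
    case False
    then have nx: "norm x > 0" by simp
    have "lnorm2 Lam x0 \<le> lnorm2 Lam ((1 / norm x) *\<^sub>R x)" using mn nx by simp
    also have "\<dots> = lnorm2 Lam x / (norm x)^2" using lnorm2_scale[of Lam "1/norm x" x] by (simp add: power_one_over field_simps)
    finally show ?thesis using nx by (simp add: field_simps)
  qed
  then show ?thesis using pos by blast
qed

lemma spd_inv:
  fixes Lam :: "real^'n^'n"
  assumes "spd Lam"
  shows "Lam *v (matrix_inv Lam *v g) = g"
proof -
  have "\<forall>x. Lam *v x = 0 \<longrightarrow> x = 0"
  proof (intro allI impI)
    fix x assume "Lam *v x = 0"
    then have "lnorm2 Lam x = 0" by (simp add: lnorm2_def)
    then show "x = 0" using assms unfolding spd_def by force
  qed
  then obtain B where "B ** Lam = mat 1" using matrix_left_invertible_ker by blast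
  then have inv: "invertible Lam" using invertible_left_inverse by blast
  then have "Lam ** matrix_inv Lam = mat 1"
    unfolding invertible_def matrix_inv_def by (rule someI2_ex) auto
  then show ?thesis by (simp add: matrix_vector_mul_assoc)
qed

lemma line_deriv:
  fixes f :: "real^'n \<Rightarrow> real"
  assumes d: "\<forall>z. (f has_derivative (\<lambda>h. grad z \<bullet> h)) (at z)"
  shows "((\<lambda>s. f (x + s *\<^sub>R v)) has_real_derivative (grad (x + s *\<^sub>R v) \<bullet> v)) (at s within S)"
proof -
  have l: "((\<lambda>s. x + s *\<^sub>R v) has_derivative (\<lambda>t. t *\<^sub>R v)) (at s within S)"
    by (auto intro!: derivative_eq_intros)
  have "((\<lambda>s. f (x + s *\<^sub>R v)) has_derivative (\<lambda>t. grad (x + s *\<^sub>R v) \<bullet> (t *\<^sub>R v))) (at s within S)"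
    using has_derivative_compose[OF l d[rule_format]] .
  then show ?thesis by (rule has_derivative_imp_has_field_derivative) (simp add: mult.commute)
qed

lemma descent:
  fixes f :: "real^'n \<Rightarrow> real"
  assumes d: "\<forall>z. (f has_derivative (\<lambda>h. grad z \<bullet> h)) (at z)"
    and lip: "\<forall>x y. norm (grad x - grad y) \<le> L * norm (x - y)"
  shows "f y \<le> f x + grad x \<bullet> (y - x) + L / 2 * (norm (y - x))^2"
proof -
  define v where "v = y - x"
  define phi where "phi s = f (x + s *\<^sub>R v) - s * (grad x \<bullet> v) - L / 2 * s^2 * (norm v)^2" for s
  have "phi 0 \<ge> phi 1"
  proof (rule DERIV_nonpos_imp_nonincreasing[of 0 1 phi])
    fix s :: real assume s: "0 \<le> s" "s \<le> 1"
    have D1: "((\<lambda>s. f (x + s *\<^sub>R v)) has_real_derivative (grad (x + s *\<^sub>R v) \<bullet> v)) (at s)"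
      using line_deriv[OF d] by blast
    have D2: "((\<lambda>s. s * (grad x \<bullet> v)) has_real_derivative (grad x \<bullet> v)) (at s)"
      by (auto intro!: derivative_eq_intros)
    have D3: "((\<lambda>s. L / 2 * s^2 * (norm v)^2) has_real_derivative (L * s * (norm v)^2)) (at s)"
      by (auto intro!: derivative_eq_intros)
    have D: "(phi has_real_derivative (grad (x + s *\<^sub>R v) \<bullet> v - grad x \<bullet> v - L * s * (norm v)^2)) (at s)"
      unfolding phi_def[abs_def] by (intro DERIV_diff D1 D2 D3)
    have "grad (x + s *\<^sub>R v) \<bullet> v - grad x \<bullet> v = (grad (x + s *\<^sub>R v) - grad x) \<bullet> v" by (simp add: inner_diff_left)
    also have "\<dots> \<le> norm (grad (x + s *\<^sub>R v) - grad x) * norm v" by (rule norm_cauchy_schwarz)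
    also have "\<dots> \<le> L * norm (s *\<^sub>R v) * norm v" using lip[rule_format, of "x + s *\<^sub>R v" x] by (simp add: mult_right_mono)
    also have "\<dots> = L * s * (norm v)^2" using s by (simp add: power2_eq_square)
    finally show "\<exists>y. (phi has_real_derivative y) (at s) \<and> y \<le> 0" using D by force
  qed simp
  then show ?thesis unfolding phi_def v_def by simp
qed

lemma strong_cvx_ineq:
  fixes f :: "real^'n \<Rightarrow> real"
  assumes d: "\<forall>z. (f has_derivative (\<lambda>h. grad z \<bullet> h)) (at z)"
    and cv: "convex_on UNIV (\<lambda>x. f x - muf / 2 * (norm x)\<^sup>2)"
  shows "f y \<ge> f x + grad x \<bullet> (y - x) + muf / 2 * (norm (y - x))^2"
proof -
  define v where "v = y - x"
  define g where "g t = f (x + t *\<^sub>R v) - muf / 2 * (norm (x + t *\<^sub>R v))^2" for t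
  have nx: "(norm (x + t *\<^sub>R v))^2 = (norm x)^2 + 2 * t * (x \<bullet> v) + t^2 * (norm v)^2" for t
    by (simp only: power2_norm_eq_inner) (simp add: inner_add_left inner_add_right inner_commute power2_eq_square algebra_simps)
  have gg: "g t = f (x + t *\<^sub>R v) - muf / 2 * ((norm x)^2 + 2 * t * (x \<bullet> v) + t^2 * (norm v)^2)" for t
    unfolding g_def nx ..
  have cg: "convex_on UNIV g"
    unfolding convex_on_def
  proof (intro conjI ballI allI impI)
    fix a b u w :: real assume u: "u \<ge> 0" "w \<ge> 0" "u + w = 1"
    have e: "x + (u * a + w * b) *\<^sub>R v = u *\<^sub>R (x + a *\<^sub>R v) + w *\<^sub>R (x + b *\<^sub>R v)"
      using u by (simp add: algebra_simps flip: scaleR_add_left)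
    show "g (u *\<^sub>R a + w *\<^sub>R b) \<le> u * g a + w * g b"
      using cv[unfolded convex_on_def] u unfolding g_def by (simp add: e)
  qed auto
  have D: "(g has_real_derivative (grad x \<bullet> v - muf * (x \<bullet> v))) (at 0 within UNIV)"
    unfolding gg[abs_def]
    by (rule line_deriv[OF d, THEN DERIV_diff, THEN DERIV_cong])
       (auto intro!: derivative_eq_intros)
  have "g 1 - g 0 \<ge> (grad x \<bullet> v - muf * (x \<bullet> v)) * (1 - 0)"
    by (rule convex_on_imp_above_tangent[OF cg]) (use D in auto)
  moreover have "v + x = y" by (simp add: v_def)
  ultimately show ?thesis unfolding gg v_def[symmetric] by (simp add: algebra_simps)
qed

lemma theta_trick:
  fixes X c :: real
  assumes h: "\<And>\<theta>. 0 < \<theta> \<Longrightarrow> \<theta> \<le> 1 \<Longrightarrow> 0 \<le> \<theta> * X + \<theta>^2 * c"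
  shows "0 \<le> X"
proof (rule ccontr)
  assume "\<not> 0 \<le> X"
  then have X: "X < 0" by simp
  define t where "t = min 1 (- X / (2 * \<bar>c\<bar> + 1))"
  have pq: "0 < - X / (2 * \<bar>c\<bar> + 1)" using X by (intro divide_pos_pos) auto
  have t0: "0 < t" "t \<le> 1" using pq by (auto simp: t_def)
  have "0 \<le> t * (X + t * c)" using h[OF t0] by (simp add: algebra_simps power2_eq_square)
  then have a: "0 \<le> X + t * c" using t0 by (simp add: zero_le_mult_iff)
  have "t * c \<le> t * \<bar>c\<bar>" using t0 by (simp add: mult_left_mono)
  also have "\<dots> \<le> (- X / (2 * \<bar>c\<bar> + 1)) * \<bar>c\<bar>" by (rule mult_right_mono) (auto simp: t_def)
  also have "\<dots> < - X" using X by (simp add: field_simps) (smt (verit) abs_ge_zero mult_nonpos_nonneg)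
  finally show False using a by linarith
qed

lemma norm_cvx_id:
  fixes y z :: "'a::real_inner"
  shows "(norm ((1 - t) *\<^sub>R z + t *\<^sub>R y))^2 = (1 - t) * (norm z)^2 + t * (norm y)^2 - t * (1 - t) * (norm (y - z))^2"
  by (simp only: power2_norm_eq_inner) (simp add: inner_add_left inner_add_right inner_diff_left inner_diff_right inner_commute algebra_simps)

lemma r_strong:
  fixes r :: "'a::real_inner \<Rightarrow> real"
  assumes cv: "convex_on D (\<lambda>x. r x - mur / 2 * (norm x)\<^sup>2)" and y: "y \<in> D" and z: "z \<in> D"
    and t: "0 \<le> t" "t \<le> 1"
  shows "r ((1 - t) *\<^sub>R z + t *\<^sub>R y) \<le> (1 - t) * r z + t * r y - mur / 2 * (t * (1 - t) * (norm (y - z))^2)"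
proof -
  have "r ((1 - t) *\<^sub>R z + t *\<^sub>R y) - mur / 2 * (norm ((1 - t) *\<^sub>R z + t *\<^sub>R y))^2
      \<le> (1 - t) * (r z - mur / 2 * (norm z)^2) + t * (r y - mur / 2 * (norm y)^2)"
    using cv[unfolded convex_on_def] y z t by auto
  then show ?thesis unfolding norm_cvx_id by (simp add: algebra_simps add_divide_distrib diff_divide_distrib)
qed

lemma xstar_fo:
  fixes f r :: "real^'n \<Rightarrow> real"
  assumes d: "\<forall>z. (f has_derivative (\<lambda>h. grad z \<bullet> h)) (at z)"
    and lip: "\<forall>x y. norm (grad x - grad y) \<le> L * norm (x - y)"
    and cv: "convex_on D (\<lambda>x. r x - mur / 2 * (norm x)\<^sup>2)"
    and xs: "xs \<in> D" and mn: "\<forall>y\<in>D. f xs + r xs \<le> f y + r y" and y: "y \<in> D"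
  shows "r y \<ge> r xs - grad xs \<bullet> (y - xs) + mur / 2 * (norm (y - xs))^2"
proof -
  define v where "v = y - xs"
  define N where "N = (norm v)^2"
  define X where "X = r y - r xs + grad xs \<bullet> v - mur / 2 * N"
  have "0 \<le> X"
  proof (rule theta_trick[where c = "(L/2 + mur/2) * N"])
    fix t :: real assume t: "0 < t" "t \<le> 1"
    define yt where "yt = (1 - t) *\<^sub>R xs + t *\<^sub>R y"
    have yt2: "yt - xs = t *\<^sub>R v" by (simp add: yt_def v_def algebra_simps)
    have ytD: "yt \<in> D" using cv[unfolded convex_on_def] xs y t unfolding yt_def convex_alt by auto
    have f1: "f xs + r xs \<le> f yt + r yt" using mn ytD by auto
    have f2: "f yt \<le> f xs + t * (grad xs \<bullet> v) + L / 2 * (t^2 * N)"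
      using descent[OF d lip, of yt xs] unfolding yt2 N_def by (simp add: power_mult_distrib)
    have f3: "r yt \<le> (1 - t) * r xs + t * r y - mur / 2 * (t * (1 - t) * N)"
      using r_strong[OF cv y xs] t unfolding yt_def N_def v_def by simp
    have "t * X + t^2 * ((L/2 + mur/2) * N) = t * (r y) - t * r xs + t * (grad xs \<bullet> v) - mur/2 * (t * (1-t) * N) + L/2 * (t^2 * N)"
      unfolding X_def by (simp add: algebra_simps power2_eq_square)
    then show "0 \<le> t * X + t^2 * ((L/2 + mur/2) * N)" using f1 f2 f3 by (simp add: algebra_simps)
  qed
  then show ?thesis unfolding X_def N_def v_def by simp
qed

lemma rho_bound:
  fixes rho A G lam :: real
  assumes "rho \<ge> 0" "A \<ge> 0" "G \<ge> 0" "lam > 0" "lam / 2 * rho^2 \<le> A + G * rho"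
  shows "rho \<le> 1 + 2 * (A + G) / lam"
proof (rule ccontr)
  assume "\<not> ?thesis"
  then have r1: "rho > 1 + 2 * (A + G) / lam" by simp
  have "2 * (A + G) / lam \<ge> 0" using assms by simp
  then have rho1: "rho \<ge> 1" using r1 by linarith
  have "A + G * rho \<le> (A + G) * rho" using assms rho1 by (simp add: algebra_simps) (metis mult_left_mono mult.right_neutral)
  then have "lam / 2 * rho * rho \<le> (A + G) * rho" using assms by (simp add: power2_eq_square)
  then have "lam / 2 * rho \<le> A + G" using rho1 by simp
  then have "rho \<le> 2 * (A + G) / lam" using assms by (simp add: field_simps)
  then show False using r1 by linarith
qed

lemma prox_exists:
  fixes Lam :: "real^'n^'n" and r :: "real^'n \<Rightarrow> real"
  assumes pcl: "proper_convex_lsc r D" and sp: "spd Lam"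
    and low: "\<forall>y\<in>D. r y \<ge> a0 - g0 \<bullet> (y - x0)"
  shows "\<exists>p\<in>D. \<forall>w\<in>D. r p + lnorm2 Lam (u - p) / 2 \<le> r w + lnorm2 Lam (u - w) / 2"
proof -
  obtain lam where lam: "lam > 0" "\<forall>x. lam * (norm x)^2 \<le> lnorm2 Lam x" using spd_lower[OF sp] by blast
  have qpos: "lnorm2 Lam x \<ge> 0" for x using lam(2)[rule_format, of x] lam(1) by (smt (verit) zero_le_power2 mult_nonneg_nonneg)
  from pcl obtain z0 where z0: "z0 \<in> D" unfolding proper_convex_lsc_def by auto
  have cl: "closed {(x, t). x \<in> D \<and> r x \<le> t}" using pcl unfolding proper_convex_lsc_def by auto
  define c where "c = r z0 + lnorm2 Lam (u - z0) / 2"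
  define h where "h = (\<lambda>(w, t). t + lnorm2 Lam (u - w) / 2)"
  have hc: "continuous_on UNIV h"
  proof -
    have "continuous_on UNIV (\<lambda>z::(real^'n) \<times> real. snd z + lnorm2 Lam (u - fst z) / 2)"
      by (intro continuous_intros continuous_on_compose2[OF lnorm2_cont[of UNIV Lam]]) auto
    moreover have "h = (\<lambda>z. snd z + lnorm2 Lam (u - fst z) / 2)" unfolding h_def by auto
    ultimately show ?thesis by simp
  qed
  define K where "K = {(x, t). x \<in> D \<and> r x \<le> t} \<inter> {z. h z \<le> c}"
  have Kcl: "closed K" unfolding K_def by (intro closed_Int cl closed_Collect_le hc continuous_on_const)
  define A where "A = \<bar>c - a0\<bar> + norm g0 * (norm u + norm x0)"
  define R where "R = 1 + 2 * (A + norm g0) / lam"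
  have Kb: "norm w \<le> norm u + R \<and> \<bar>t\<bar> \<le> \<bar>c\<bar> + \<bar>a0\<bar> + norm g0 * (norm u + R + norm x0)" if wt: "(w, t) \<in> K" for w t
  proof -
    have wD: "w \<in> D" and rt: "r w \<le> t" and tc: "t + lnorm2 Lam (u - w) / 2 \<le> c" using wt unfolding K_def h_def by auto
    have lw: "t \<ge> a0 - norm g0 * (norm w + norm x0)"
    proof -
      have "g0 \<bullet> (w - x0) \<le> norm g0 * norm (w - x0)" by (rule norm_cauchy_schwarz)
      also have "\<dots> \<le> norm g0 * (norm w + norm x0)" by (intro mult_left_mono norm_triangle_ineq4) auto
      finally show ?thesis using low wD rt by force
    qed
    have nw: "norm w \<le> norm (u - w) + norm u" by (metis norm_triangle_sub norm_minus_commute add.commute)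
    have "lam / 2 * (norm (u - w))^2 \<le> lnorm2 Lam (u - w) / 2" using lam(2) by auto
    also have "\<dots> \<le> c - t" using tc by simp
    also have "\<dots> \<le> c - a0 + norm g0 * (norm w + norm x0)" using lw by simp
    also have "\<dots> \<le> A + norm g0 * norm (u - w)"
      unfolding A_def using nw by (smt (verit) norm_ge_zero mult_left_mono distrib_left)
    finally have "norm (u - w) \<le> R" unfolding R_def
      by (intro rho_bound) (auto simp: A_def lam)
    then have nwR: "norm w \<le> norm u + R" using nw by simp
    have "t \<le> c" using tc qpos[of "u - w"] by simp
    moreover have "norm g0 * (norm w + norm x0) \<le> norm g0 * (norm u + R + norm x0)" using nwR by (intro mult_left_mono) auto
    ultimately show ?thesis using lw nwR by (smt (verit) norm_ge_zero mult_nonneg_nonneg)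
  qed
  have Kbd: "bounded K" unfolding bounded_iff
  proof (intro exI ballI)
    fix z assume "z \<in> K"
    then obtain w t where z: "z = (w, t)" and wt: "(w,t) \<in> K" by (cases z) auto
    have "norm z \<le> norm w + norm t" unfolding z by (rule norm_Pair_le)
    then show "norm z \<le> (norm u + R) + (\<bar>c\<bar> + \<bar>a0\<bar> + norm g0 * (norm u + R + norm x0))" using Kb[OF wt] by simp
  qed
  have Kne: "K \<noteq> {}" using z0 unfolding K_def h_def c_def by auto
  obtain z1 where z1: "z1 \<in> K" and zmin: "\<forall>z\<in>K. h z1 \<le> h z"
    using continuous_attains_inf[OF _ Kne continuous_on_subset[OF hc]] Kcl Kbd compact_eq_bounded_closed by blast
  obtain w0 t0 where z1e: "z1 = (w0, t0)" by (cases z1)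
  have w0D: "w0 \<in> D" and rw0: "r w0 \<le> t0" and hc0: "h z1 \<le> c" using z1 unfolding z1e K_def by auto
  show ?thesis
  proof (intro bexI[OF _ w0D] ballI)
    fix w assume wD: "w \<in> D"
    have "r w0 + lnorm2 Lam (u - w0) / 2 \<le> h z1" unfolding z1e h_def using rw0 by simp
    also have "\<dots> \<le> r w + lnorm2 Lam (u - w) / 2"
    proof (cases "r w + lnorm2 Lam (u - w) / 2 \<le> c")
      case True
      then have "(w, r w) \<in> K" using wD unfolding K_def h_def by auto
      then show ?thesis using zmin unfolding h_def by fastforce
    next
      case False then show ?thesis using hc0 by simp
    qed
    finally show "r w0 + lnorm2 Lam (u - w0) / 2 \<le> r w + lnorm2 Lam (u - w) / 2" .
  qed
qed

lemma arith_prox: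
  fixes t X Q m N ry rp ryt W A B :: real
  assumes "rp + A/2 \<le> ryt + B/2" "B = A - 2*t*W + t^2*Q" "ryt \<le> (1-t)*rp + t*ry - m/2*(t*(1-t)*N)"
    and "X = ry - rp - W - m/2*N"
  shows "0 \<le> t*X + t^2*(Q/2 + m/2*N)"
proof -
  have "t*X + t^2*(Q/2 + m/2*N) = t*ry - t*rp - t*W - m/2*(t*(1-t)*N) + t^2*Q/2"
    unfolding assms(4) by (simp add: algebra_simps power2_eq_square)
  moreover have "B/2 = A/2 - t*W + t^2*Q/2" using assms(2) by simp
  moreover have "(1-t)*rp = rp - t*rp" by (simp add: algebra_simps)
  moreover have "m/2*(t*(1-t)*N) = m/2*t*N - m/2*t^2*N" by (simp add: algebra_simps power2_eq_square)
  ultimately show ?thesis using assms(1,3) by (simp add: algebra_simps)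
qed

lemma prox_fo:
  fixes Lam :: "real^'n^'n" and r :: "real^'n \<Rightarrow> real"
  assumes sym: "transpose Lam = Lam"
    and cv: "convex_on D (\<lambda>x. r x - mur / 2 * (norm x)\<^sup>2)"
    and p: "p \<in> D" and mn: "\<forall>w\<in>D. r p + lnorm2 Lam (u - p) / 2 \<le> r w + lnorm2 Lam (u - w) / 2"
    and y: "y \<in> D"
  shows "r y \<ge> r p + (Lam *v (u - p)) \<bullet> (y - p) + mur / 2 * (norm (y - p))^2"
proof -
  define v where "v = y - p"
  define N where "N = (norm v)^2"
  define X where "X = r y - r p - (Lam *v (u - p)) \<bullet> v - mur / 2 * N"
  have "0 \<le> X"
  proof (rule theta_trick[where c = "lnorm2 Lam v / 2 + mur/2 * N"])
    fix t :: real assume t: "0 < t" "t \<le> 1"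
    define yt where "yt = (1 - t) *\<^sub>R p + t *\<^sub>R y"
    have yt2: "u - yt = (u - p) - t *\<^sub>R v" by (simp add: yt_def v_def algebra_simps)
    have ytD: "yt \<in> D" using cv[unfolded convex_on_def] p y t unfolding yt_def convex_alt by auto
    have f1: "r p + lnorm2 Lam (u - p) / 2 \<le> r yt + lnorm2 Lam (u - yt) / 2" using mn ytD by auto
    have f2: "lnorm2 Lam (u - yt) = lnorm2 Lam (u - p) - 2 * t * ((Lam *v (u - p)) \<bullet> v) + t^2 * lnorm2 Lam v"
      unfolding yt2 by (rule lnorm2_expand[OF sym])
    have f3: "r yt \<le> (1 - t) * r p + t * r y - mur / 2 * (t * (1 - t) * N)"
      using r_strong[OF cv y p] t unfolding yt_def N_def v_def by simp
    show "0 \<le> t * X + t^2 * (lnorm2 Lam v / 2 + mur/2 * N)"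
      by (rule arith_prox[OF f1 f2 f3]) (simp add: X_def)
  qed
  then show ?thesis unfolding X_def N_def v_def by simp
qed

lemma core:
  fixes f :: "real^'n \<Rightarrow> real" and grad :: "real^'n \<Rightarrow> real^'n" and r :: "real^'n \<Rightarrow> real"
    and Lam :: "real^'n^'n" and g x xs :: "real^'n"
  assumes d: "\<forall>x. (f has_derivative (\<lambda>h. grad x \<bullet> h)) (at x)"
    and pcl: "proper_convex_lsc r D"
    and lip: "\<forall>x y. norm (grad x - grad y) \<le> L * norm (x - y)"
    and mur: "mur \<ge> 0" and mu: "muf + mur > 0"
    and cvf: "convex_on UNIV (\<lambda>x. f x - muf / 2 * (norm x)\<^sup>2)"
    and cvr: "convex_on D (\<lambda>x. r x - mur / 2 * (norm x)\<^sup>2)"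
    and sp: "spd Lam" and bnd: "\<forall>x. lm * (norm x)\<^sup>2 \<le> lnorm2 Lam x \<and> lnorm2 Lam x \<le> lM * (norm x)\<^sup>2"
    and xs: "xs \<in> D" and mn: "\<forall>y\<in>D. f xs + r xs \<le> f y + r y"
  shows "(muf + mur) * (norm (x - xs))^2 \<le> 2 * ((lM + mur) * norm (Fres Lam r D g x) + norm (grad x - g)) * norm (x - xs)
           + (L - 2 * lm - mur) * (norm (Fres Lam r D g x))^2 + 2 * norm (Fres Lam r D g x) * norm (grad x - g)"
proof -
  have sym: "transpose Lam = Lam" using sp unfolding spd_def by auto
  have qpos: "lnorm2 Lam v \<ge> 0" for v using sp unfolding spd_def
    by (cases "v = 0") (auto simp: lnorm2_def less_imp_le)
  have lM: "lM \<ge> 0"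
  proof -
    have "lnorm2 Lam (axis undefined 1) > 0" using sp unfolding spd_def
      by (metis norm_axis_1 norm_zero zero_neq_one)
    then show ?thesis using bnd[rule_format, of "axis undefined (1::real)"] by simp
  qed
  have low: "\<forall>y\<in>D. r y \<ge> r xs - grad xs \<bullet> (y - xs)"
  proof
    fix y assume "y \<in> D"
    from xstar_fo[OF d lip cvr xs mn this] mur show "r y \<ge> r xs - grad xs \<bullet> (y - xs)"
      by (smt (verit) zero_le_power2 mult_nonneg_nonneg divide_nonneg_pos)
  qed
  define u where "u = x - matrix_inv Lam *v g"
  define p where "p = prox Lam r D u"
  have ex: "\<exists>p\<in>D. \<forall>w\<in>D. r p + lnorm2 Lam (u - p) / 2 \<le> r w + lnorm2 Lam (u - w) / 2"
    using prox_exists[OF pcl sp] low by blast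
  have pp: "p \<in> D \<and> (\<forall>w\<in>D. r p + lnorm2 Lam (u - p) / 2 \<le> r w + lnorm2 Lam (u - w) / 2)"
    unfolding p_def prox_def using someI_ex[OF ex[unfolded Bex_def]] by blast
  then have pD: "p \<in> D" and pmin: "\<forall>w\<in>D. r p + lnorm2 Lam (u - p) / 2 \<le> r w + lnorm2 Lam (u - w) / 2" by auto
  define F where "F = x - p"
  have FF: "Fres Lam r D g x = F" unfolding Fres_def F_def p_def u_def ..
  define dv where "dv = x - xs"
  define e where "e = p - xs"
  have ede: "e = dv - F" by (simp add: e_def dv_def F_def)
  have LU: "Lam *v (u - p) = Lam *v F - g"
    unfolding u_def F_def using spd_inv[OF sp, of g] by (simp add: matrix_vector_mult_diff_distrib algebra_simps)
  have r1: "r xs \<ge> r p + (Lam *v F - g) \<bullet> (xs - p) + mur / 2 * (norm (xs - p))^2"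
    using prox_fo[OF sym cvr pD pmin xs] LU by simp
  have r2: "r p \<ge> r xs - grad xs \<bullet> (p - xs) + mur / 2 * (norm (p - xs))^2"
    using xstar_fo[OF d lip cvr xs mn pD] .
  have fa: "f xs \<ge> f x + grad x \<bullet> (xs - x) + muf / 2 * (norm (xs - x))^2" by (rule strong_cvx_ineq[OF d cvf])
  have fb: "f p \<ge> f xs + grad xs \<bullet> (p - xs) + muf / 2 * (norm (p - xs))^2" by (rule strong_cvx_ineq[OF d cvf])
  have fc: "f p \<le> f x + grad x \<bullet> (p - x) + L / 2 * (norm (p - x))^2" by (rule descent[OF d lip])
  define E where "E = (norm e)^2"
  have nxp: "norm (xs - p) = norm e" "norm (p - xs) = norm e" by (auto simp: e_def norm_minus_commute)
  have nxx: "norm (xs - x) = norm dv" by (simp add: dv_def norm_minus_commute)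
  have npx: "norm (p - x) = norm F" by (simp add: F_def norm_minus_commute)
  have i1: "(Lam *v F - g) \<bullet> (xs - p) = - ((Lam *v F) \<bullet> e) + g \<bullet> e"
    by (simp add: e_def inner_diff_left inner_diff_right algebra_simps)
  have i2: "grad x \<bullet> (xs - x) = - (grad x \<bullet> dv)" "grad x \<bullet> (p - x) = - (grad x \<bullet> F)"
    by (simp_all add: dv_def F_def inner_diff_right)
  have i3: "grad x \<bullet> e = grad x \<bullet> dv - grad x \<bullet> F" unfolding ede by (simp add: inner_diff_right)
  have S1: "mur * E \<le> (Lam *v F) \<bullet> e - g \<bullet> e + grad xs \<bullet> e"
    using r1 r2 unfolding i1 nxp E_def[symmetric] by (simp add: e_def[symmetric] algebra_simps)
  have S2: "muf / 2 * ((norm dv)^2 + E) - L / 2 * (norm F)^2 \<le> grad x \<bullet> e - grad xs \<bullet> e"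
    using fa fb fc unfolding i2 nxp nxx npx E_def[symmetric] i3 by (simp add: e_def[symmetric] algebra_simps)
  have S3: "muf * (norm dv)^2 + (muf + 2 * mur) * E \<le> 2 * ((Lam *v F) \<bullet> e) + 2 * ((grad x - g) \<bullet> e) + L * (norm F)^2"
    using S1 S2 by (simp add: inner_diff_left algebra_simps)
  have E0: "(muf + mur) * E \<ge> 0" using mu by (simp add: E_def)
  have S4: "muf * (norm dv)^2 + mur * E \<le> 2 * ((Lam *v F) \<bullet> e) + 2 * ((grad x - g) \<bullet> e) + L * (norm F)^2"
    using S3 E0 by (simp add: algebra_simps)
  have Ee: "E = (norm dv)^2 - 2 * (dv \<bullet> F) + (norm F)^2"
    unfolding E_def ede by (simp only: power2_norm_eq_inner) (simp add: inner_diff_left inner_diff_right inner_commute)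
  have ie: "(Lam *v F) \<bullet> e = (Lam *v F) \<bullet> dv - lnorm2 Lam F" "(grad x - g) \<bullet> e = (grad x - g) \<bullet> dv - (grad x - g) \<bullet> F"
    unfolding ede lnorm2_def by (simp_all add: inner_diff_right inner_commute)
  have S5: "(muf + mur) * (norm dv)^2 \<le> 2 * ((Lam *v F) \<bullet> dv) + 2 * mur * (dv \<bullet> F) - 2 * lnorm2 Lam F + (L - mur) * (norm F)^2
      + 2 * ((grad x - g) \<bullet> dv) - 2 * ((grad x - g) \<bullet> F)"
    using S4 unfolding Ee ie by (simp add: algebra_simps)
  have b1: "(Lam *v F) \<bullet> dv \<le> lM * norm F * norm dv"
    by (rule lnorm2_cs[OF sym qpos _ lM]) (use bnd in auto)
  have b2: "mur * (dv \<bullet> F) \<le> mur * (norm dv * norm F)"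
    using mur by (intro mult_left_mono norm_cauchy_schwarz)
  have b3: "lnorm2 Lam F \<ge> lm * (norm F)^2" using bnd by auto
  have b4: "(grad x - g) \<bullet> dv \<le> norm (grad x - g) * norm dv" by (rule norm_cauchy_schwarz)
  have b5: "- ((grad x - g) \<bullet> F) \<le> norm (grad x - g) * norm F"
  proof -
    have "(g - grad x) \<bullet> F \<le> norm (g - grad x) * norm F" by (rule norm_cauchy_schwarz)
    moreover have "(g - grad x) \<bullet> F = - ((grad x - g) \<bullet> F)" by (simp add: inner_diff_left)
    ultimately show ?thesis by (simp add: norm_minus_commute)
  qed
  have "(muf + mur) * (norm dv)^2 \<le> 2 * ((lM + mur) * norm F + norm (grad x - g)) * norm dv
           + (L - 2 * lm - mur) * (norm F)^2 + 2 * norm F * norm (grad x - g)"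
    using S5 b1 b2 b3 b4 b5 by (simp add: algebra_simps)
  then show ?thesis unfolding FF dv_def .
qed




lemma young_tau:
  fixes P Q tau :: real
  assumes tau: "tau > 0"
  shows "(P + Q)^2 \<le> (1 + tau) * P^2 + (1 + 1 / tau) * Q^2"
proof -
  have "0 \<le> (tau * P - Q)^2" by simp
  then have "2 * tau * (P * Q) \<le> tau * (tau * P^2) + Q^2" by (simp add: power2_eq_square algebra_simps)
  then have "2 * (P * Q) \<le> (tau * (tau * P^2) + Q^2) / tau" using tau by (simp add: pos_le_divide_eq mult.commute mult.left_commute)
  also have "\<dots> = tau * P^2 + Q^2 / tau" using tau by (simp add: add_divide_distrib)
  finally have "2 * (P * Q) \<le> tau * P^2 + Q^2 / tau" .
  moreover have "(P + Q)^2 = P^2 + 2 * (P * Q) + Q^2" by (simp add: power2_eq_square algebra_simps)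
  moreover have "(1 + tau) * P^2 + (1 + 1 / tau) * Q^2 = P^2 + tau * P^2 + Q^2 + Q^2 / tau" by (simp add: algebra_simps)
  ultimately show ?thesis by linarith
qed

lemma sq_rewrite:
  fixes a s mu c :: real
  assumes mu: "mu > 0"
  shows "c * ((a + s) / mu)^2 = c / mu * (s / sqrt mu + a / sqrt mu)^2"
proof -
  have "s / sqrt mu + a / sqrt mu = (a + s) / sqrt mu" by (simp add: add_divide_distrib)
  then have "(s / sqrt mu + a / sqrt mu)^2 = (a + s)^2 / mu" using mu by (simp add: power_divide)
  then show ?thesis by (simp add: power_divide power2_eq_square)
qed

lemma quad_tau:
  fixes mu a b1 t y z tau :: real
  assumes mu: "mu > 0" and a: "a \<ge> 0" and t: "t \<ge> 0" and y: "y \<ge> 0" and z: "z \<ge> 0" and tau: "tau > 0"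
    and h: "mu * t^2 \<le> 2 * (a * y + z) * t + b1 * y^2 + 2 * y * z"
    and hb: "a^2 + mu * b1 \<ge> 0"
  shows "t^2 \<le> (1 + tau) / mu * (sqrt (b1 + a^2 / mu + tau) + sqrt (a^2 / mu))^2 * y^2
      + (1 + 1 / tau) * ((2 + (a + mu) / sqrt (mu * tau)) / mu)^2 * z^2"
proof -
  have q0: "b1 + a^2 / mu + tau \<ge> 0" using hb mu tau by (simp add: field_simps) (smt (verit) mult_pos_pos)
  define s where "s = sqrt mu * sqrt (b1 + a^2 / mu + tau)"
  have s0: "s \<ge> 0" unfolding s_def using q0 mu by simp
  have s2: "s^2 = a^2 + mu * (b1 + tau)" unfolding s_def using q0 mu
    by (simp add: power_mult_distrib field_simps)
  have smt: "s \<ge> sqrt (mu * tau)"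
  proof -
    have "s^2 \<ge> mu * tau" using s2 hb by (simp add: algebra_simps)
    then have "sqrt (mu * tau) \<le> sqrt (s^2)" by (rule real_sqrt_le_mono)
    then show ?thesis using s0 by simp
  qed
  have smt0: "sqrt (mu * tau) > 0" using mu tau by simp
  define k where "k = 1 + (a + mu) / sqrt (mu * tau)"
  have k1: "k \<ge> 1" unfolding k_def using a mu smt0 by simp
  have ks: "k * s \<ge> a + mu"
  proof -
    have "(a + mu) / sqrt (mu * tau) * sqrt (mu * tau) \<le> (a + mu) / sqrt (mu * tau) * s"
      using smt a mu smt0 by (intro mult_left_mono) auto
    also have "\<dots> \<le> k * s" unfolding k_def using s0 by (simp add: algebra_simps)
    finally show ?thesis using smt0 mu tau by simp
  qed
  define S where "S = s * y + k * z"
  have S0: "S \<ge> 0" unfolding S_def using s0 k1 y z by simp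
  define B where "B = a * y + z"
  have "(mu * t - B)^2 = mu * (mu * t^2) - 2 * mu * B * t + B^2" by (simp add: power2_eq_square algebra_simps)
  also have "\<dots> \<le> mu * (2 * B * t + b1 * y^2 + 2 * y * z) - 2 * mu * B * t + B^2"
  proof -
    have h': "mu * t^2 \<le> 2 * B * t + b1 * y^2 + 2 * y * z" using h unfolding B_def .
    show ?thesis using mult_left_mono[OF h', of mu] mu by linarith
  qed
  also have "\<dots> = (a^2 + mu * b1) * y^2 + 2 * (a + mu) * y * z + z^2" unfolding B_def by (simp add: power2_eq_square algebra_simps)
  also have "\<dots> \<le> s^2 * y^2 + 2 * (k * s) * y * z + k^2 * z^2"
  proof -
    have "(a^2 + mu * b1) * y^2 \<le> s^2 * y^2" using s2 mu tau by (intro mult_right_mono) auto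
    moreover have "2 * (a + mu) * y * z \<le> 2 * (k * s) * y * z" using ks y z by (simp add: mult_right_mono mult_left_mono)
    moreover have "z^2 \<le> k^2 * z^2"
    proof -
      have "1 \<le> k^2" using k1 by (rule one_le_power)
      from mult_right_mono[OF this, of "z^2"] show ?thesis by simp
    qed
    ultimately show ?thesis by linarith
  qed
  also have "\<dots> = S^2" unfolding S_def by (simp add: power2_eq_square algebra_simps)
  finally have "mu * t - B \<le> S" using S0 by (rule power2_le_imp_le)
  then have "mu * t \<le> (a + s) * y + (1 + k) * z" unfolding B_def S_def by (simp add: algebra_simps)
  then have "t \<le> ((a + s) * y + (1 + k) * z) / mu" using mu by (simp add: pos_le_divide_eq mult.commute)
  moreover have "((a + s) * y + (1 + k) * z) / mu = (a + s) / mu * y + (1 + k) / mu * z" using mu by (simp add: field_simps)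
  ultimately have tle: "t \<le> (a + s) / mu * y + (1 + k) / mu * z" by simp
  define T1 where "T1 = (a + s) / mu"
  define K where "K = (1 + k) / mu"
  have T10: "T1 \<ge> 0" "K \<ge> 0" unfolding T1_def K_def using a s0 mu k1 by auto
  have "t^2 \<le> (T1 * y + K * z)^2" using tle t unfolding T1_def K_def by (intro power_mono) auto
  also have "\<dots> \<le> (1 + tau) * T1^2 * y^2 + (1 + 1 / tau) * K^2 * z^2"
    using young_tau[OF tau, of "T1 * y" "K * z"] by (simp add: power_mult_distrib mult.assoc)
  also have "(1 + tau) * T1^2 = (1 + tau) / mu * (sqrt (b1 + a^2 / mu + tau) + sqrt (a^2 / mu))^2"
  proof -
    have sa: "sqrt (a^2 / mu) = a / sqrt mu" using a mu by (simp add: real_sqrt_divide)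
    have sb: "sqrt (b1 + a^2 / mu + tau) = s / sqrt mu" unfolding s_def using mu by simp
    show ?thesis unfolding sa sb T1_def by (rule sq_rewrite[OF mu])
  qed
  also have "K = (2 + (a + mu) / sqrt (mu * tau)) / mu" unfolding K_def k_def by simp
  finally show ?thesis .
qed

lemma quad_exact:
  fixes mu a b1 t y :: real
  assumes mu: "mu > 0" and a: "a \<ge> 0" and t: "t \<ge> 0" and y: "y \<ge> 0"
    and h: "mu * t^2 \<le> 2 * (a * y) * t + b1 * y^2"
    and hb: "a^2 + mu * b1 \<ge> 0"
  shows "t^2 \<le> (1 + 0) / mu * (sqrt (b1 + a^2 / mu + 0) + sqrt (a^2 / mu))^2 * y^2"
proof -
  have q0: "b1 + a^2 / mu \<ge> 0" using hb mu by (simp add: field_simps)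
  define s where "s = sqrt mu * sqrt (b1 + a^2 / mu)"
  have s0: "s \<ge> 0" unfolding s_def using q0 mu by simp
  have s2: "s^2 = a^2 + mu * b1" unfolding s_def using q0 mu
    by (simp add: power_mult_distrib field_simps)
  define B where "B = a * y"
  have "(mu * t - B)^2 = mu * (mu * t^2) - 2 * mu * B * t + B^2" by (simp add: power2_eq_square algebra_simps)
  also have "\<dots> \<le> mu * (2 * B * t + b1 * y^2) - 2 * mu * B * t + B^2"
  proof -
    have h': "mu * t^2 \<le> 2 * B * t + b1 * y^2" using h unfolding B_def .
    show ?thesis using mult_left_mono[OF h', of mu] mu by linarith
  qed
  also have "\<dots> = (s * y)^2" unfolding B_def power_mult_distrib s2 by (simp add: power2_eq_square algebra_simps)
  finally have sq: "(mu * t - B)^2 \<le> (s * y)^2" .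
  have "0 \<le> s * y" using s0 y by simp
  with sq have "mu * t - B \<le> s * y" by (rule power2_le_imp_le)
  then have "mu * t \<le> (a + s) * y" unfolding B_def by (simp add: algebra_simps)
  then have "t \<le> ((a + s) * y) / mu" using mu by (simp add: pos_le_divide_eq mult.commute)
  then have tle: "t \<le> (a + s) / mu * y" by simp
  have "t^2 \<le> ((a + s) / mu * y)^2" using tle t by (intro power_mono) auto
  also have "\<dots> = (1 + 0) * ((a + s) / mu)^2 * y^2" by (simp only: power_mult_distrib) simp
  also have "(1 + 0) * ((a + s) / mu)^2 = (1 + 0) / mu * (sqrt (b1 + a^2 / mu + 0) + sqrt (a^2 / mu))^2"
  proof -
    have sa: "sqrt (a^2 / mu) = a / sqrt mu" using a mu by (simp add: real_sqrt_divide)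
    have sb: "sqrt (b1 + a^2 / mu + 0) = s / sqrt mu" unfolding s_def using mu by simp
    show ?thesis unfolding sa sb by (rule sq_rewrite[OF mu])
  qed
  finally show ?thesis .
qed

theorem lemma3p3:
  shows "\<exists>B2 :: real \<Rightarrow> real \<Rightarrow> real \<Rightarrow> real \<Rightarrow> real \<Rightarrow> real \<Rightarrow> real.
    (\<forall>\<tau> L muf mur lm lM. B2 \<tau> L muf mur lm lM > 0) \<and>
    (\<forall>(f :: real^'n \<Rightarrow> real) (grad :: real^'n \<Rightarrow> real^'n) (r :: real^'n \<Rightarrow> real)
       (D :: (real^'n) set) (G :: 's \<Rightarrow> real^'n \<Rightarrow> real^'n) (Lam :: real^'n^'n)
       (L :: real) (muf :: real) (mur :: real) (lm :: real) (lM :: real) (xstar :: real^'n).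
     (\<forall>x. (f has_derivative (\<lambda>h. grad x \<bullet> h)) (at x)) \<and> continuous_on UNIV grad \<and>
     proper_convex_lsc r D \<and>
     L > 0 \<and> (\<forall>x y. norm (grad x - grad y) \<le> L * norm (x - y)) \<and>
     mur \<ge> 0 \<and> muf + mur > 0 \<and>
     convex_on UNIV (\<lambda>x. f x - muf / 2 * (norm x)\<^sup>2) \<and>
     convex_on D (\<lambda>x. r x - mur / 2 * (norm x)\<^sup>2) \<and>
     spd Lam \<and> (\<forall>x. lm * (norm x)\<^sup>2 \<le> lnorm2 Lam x \<and> lnorm2 Lam x \<le> lM * (norm x)\<^sup>2) \<and>
     xstar \<in> D \<and> (\<forall>y\<in>D. f xstar + r xstar \<le> f y + r y)
     \<longrightarrow>
     (let b1 = L - 2 * lm - mur; b2 = (lM + mur)\<^sup>2 / (muf + mur);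
          B1 = (\<lambda>\<tau>. (1 + \<tau>) / (muf + mur) * (sqrt (b1 + b2 + \<tau>) + sqrt b2)\<^sup>2) in
      (\<forall>\<tau>>0. \<forall>x s. (norm (x - xstar))\<^sup>2 \<le>
          B1 \<tau> * (norm (Fres Lam r D (G s x) x))\<^sup>2
          + B2 \<tau> L muf mur lm lM * (norm (grad x - G s x))\<^sup>2) \<and>
      (\<forall>x. (norm (x - xstar))\<^sup>2 \<le> B1 0 * (norm (Fres Lam r D (grad x) x))\<^sup>2)))"
proof -
  define B2 :: "real \<Rightarrow> real \<Rightarrow> real \<Rightarrow> real \<Rightarrow> real \<Rightarrow> real \<Rightarrow> real" where
    "B2 = (\<lambda>\<tau> L muf mur lm lM. \<bar>1 + 1 / \<tau>\<bar> * ((2 + (lM + mur + (muf + mur)) / sqrt ((muf + mur) * \<tau>)) / (muf + mur))^2 + 1)"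
  have pos: "\<forall>\<tau> L muf mur lm lM. B2 \<tau> L muf mur lm lM > 0"
    unfolding B2_def by (intro allI) (smt (verit) abs_ge_zero zero_le_power2 mult_nonneg_nonneg)
  show ?thesis
  proof (intro exI[of _ B2] conjI pos allI impI)
    fix f :: "real^'n \<Rightarrow> real" and grad :: "real^'n \<Rightarrow> real^'n" and r :: "real^'n \<Rightarrow> real"
      and D :: "(real^'n) set" and G :: "'s \<Rightarrow> real^'n \<Rightarrow> real^'n" and Lam :: "real^'n^'n"
      and L muf mur lm lM :: real and xstar :: "real^'n"
    assume H: "(\<forall>x. (f has_derivative (\<lambda>h. grad x \<bullet> h)) (at x)) \<and> continuous_on UNIV grad \<and>
     proper_convex_lsc r D \<and>
     L > 0 \<and> (\<forall>x y. norm (grad x - grad y) \<le> L * norm (x - y)) \<and>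
     mur \<ge> 0 \<and> muf + mur > 0 \<and>
     convex_on UNIV (\<lambda>x. f x - muf / 2 * (norm x)\<^sup>2) \<and>
     convex_on D (\<lambda>x. r x - mur / 2 * (norm x)\<^sup>2) \<and>
     spd Lam \<and> (\<forall>x. lm * (norm x)\<^sup>2 \<le> lnorm2 Lam x \<and> lnorm2 Lam x \<le> lM * (norm x)\<^sup>2) \<and>
     xstar \<in> D \<and> (\<forall>y\<in>D. f xstar + r xstar \<le> f y + r y)"
    then have d: "\<forall>x. (f has_derivative (\<lambda>h. grad x \<bullet> h)) (at x)"
      and pcl: "proper_convex_lsc r D"
      and lip: "\<forall>x y. norm (grad x - grad y) \<le> L * norm (x - y)"
      and mur: "mur \<ge> 0" and mu: "muf + mur > 0"
      and cvf: "convex_on UNIV (\<lambda>x. f x - muf / 2 * (norm x)\<^sup>2)"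
      and cvr: "convex_on D (\<lambda>x. r x - mur / 2 * (norm x)\<^sup>2)"
      and sp: "spd Lam" and bnd: "\<forall>x. lm * (norm x)\<^sup>2 \<le> lnorm2 Lam x \<and> lnorm2 Lam x \<le> lM * (norm x)\<^sup>2"
      and xs: "xstar \<in> D" and mn: "\<forall>y\<in>D. f xstar + r xstar \<le> f y + r y"
      by auto
    note C = core[OF d pcl lip mur mu cvf cvr sp bnd xs mn]
    define e1 :: "real^'n" where "e1 = axis undefined 1"
    have ne1: "norm e1 = 1" unfolding e1_def by simp
    have q1: "lnorm2 Lam e1 > 0" using sp ne1 unfolding spd_def by (metis norm_zero zero_neq_one)
    have lM: "lM \<ge> 0" "lm \<le> lM" using bnd[rule_format, of e1] q1 ne1 by auto
    have mufL: "muf \<le> L"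
    proof -
      have A1: "f e1 \<ge> f 0 + grad 0 \<bullet> (e1 - 0) + muf / 2 * (norm (e1 - 0))^2" by (rule strong_cvx_ineq[OF d cvf])
      have A2: "f 0 \<ge> f e1 + grad e1 \<bullet> (0 - e1) + muf / 2 * (norm (0 - e1))^2" by (rule strong_cvx_ineq[OF d cvf])
      have "muf \<le> (grad e1 - grad 0) \<bullet> e1" using A1 A2 ne1 by (simp add: inner_diff_left)
      also have "\<dots> \<le> norm (grad e1 - grad 0) * norm e1" by (rule norm_cauchy_schwarz)
      also have "\<dots> \<le> L" using lip[rule_format, of e1 0] ne1 by simp
      finally show ?thesis .
    qed
    define mu where "mu = muf + mur"
    define a where "a = lM + mur"
    define b1 where "b1 = L - 2 * lm - mur"
    have a0: "a \<ge> 0" using lM mur by (simp add: a_def)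
    have mu0: "mu > 0" using mu by (simp add: mu_def)
    have hb: "a^2 + mu * b1 \<ge> 0"
    proof -
      have "a^2 \<ge> 2 * mu * a - mu^2" using zero_le_power2[of "a - mu"] by (simp add: power2_eq_square algebra_simps)
      moreover have "2 * mu * a - mu^2 + mu * b1 = mu * (2 * (lM - lm) + (L - muf))"
        by (simp add: a_def b1_def mu_def power2_eq_square algebra_simps)
      moreover have "mu * (2 * (lM - lm) + (L - muf)) \<ge> 0" using mu0 lM mufL by simp
      ultimately show ?thesis by linarith
    qed
    show "let b1 = L - 2 * lm - mur; b2 = (lM + mur)\<^sup>2 / (muf + mur);
          B1 = (\<lambda>\<tau>. (1 + \<tau>) / (muf + mur) * (sqrt (b1 + b2 + \<tau>) + sqrt b2)\<^sup>2) in
      (\<forall>\<tau>>0. \<forall>x s. (norm (x - xstar))\<^sup>2 \<le>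
          B1 \<tau> * (norm (Fres Lam r D (G s x) x))\<^sup>2
          + B2 \<tau> L muf mur lm lM * (norm (grad x - G s x))\<^sup>2) \<and>
      (\<forall>x. (norm (x - xstar))\<^sup>2 \<le> B1 0 * (norm (Fres Lam r D (grad x) x))\<^sup>2)"
      unfolding Let_def
    proof (intro conjI allI impI)
      fix \<tau> :: real and x :: "real^'n" and s :: 's
      assume tau: "\<tau> > 0"
      have Q: "(norm (x - xstar))^2 \<le> (1 + \<tau>) / mu * (sqrt (b1 + a^2 / mu + \<tau>) + sqrt (a^2 / mu))^2 * (norm (Fres Lam r D (G s x) x))^2
          + (1 + 1 / \<tau>) * ((2 + (a + mu) / sqrt (mu * \<tau>)) / mu)^2 * (norm (grad x - G s x))^2"
        by (rule quad_tau[OF mu0 a0 norm_ge_zero norm_ge_zero norm_ge_zero tau _ hb])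
           (use C[where g="G s x" and x=x] in \<open>simp add: a_def b1_def mu_def\<close>)
      have K: "(1 + 1 / \<tau>) * ((2 + (a + mu) / sqrt (mu * \<tau>)) / mu)^2 * (norm (grad x - G s x))^2
          \<le> B2 \<tau> L muf mur lm lM * (norm (grad x - G s x))^2"
      proof (rule mult_right_mono)
        show "(1 + 1 / \<tau>) * ((2 + (a + mu) / sqrt (mu * \<tau>)) / mu)^2 \<le> B2 \<tau> L muf mur lm lM"
          unfolding B2_def a_def mu_def
          by (smt (verit) abs_ge_self mult_right_mono zero_le_power2)
      qed simp
      show "(norm (x - xstar))^2 \<le> (1 + \<tau>) / (muf + mur) * (sqrt (L - 2 * lm - mur + (lM + mur)^2 / (muf + mur) + \<tau>) + sqrt ((lM + mur)^2 / (muf + mur)))^2 *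
              (norm (Fres Lam r D (G s x) x))^2 + B2 \<tau> L muf mur lm lM * (norm (grad x - G s x))^2"
        using Q K unfolding a_def b1_def mu_def by linarith
    next
      fix x :: "real^'n"
      have Q: "(norm (x - xstar))^2 \<le> (1 + 0) / mu * (sqrt (b1 + a^2 / mu + 0) + sqrt (a^2 / mu))^2 * (norm (Fres Lam r D (grad x) x))^2"
        by (rule quad_exact[OF mu0 a0 norm_ge_zero norm_ge_zero _ hb])
           (use C[where g="grad x" and x=x] in \<open>simp add: a_def b1_def mu_def\<close>)
      then show "(norm (x - xstar))^2 \<le> (1 + 0) / (muf + mur) * (sqrt (L - 2 * lm - mur + (lM + mur)^2 / (muf + mur) + 0) + sqrt ((lM + mur)^2 / (muf + mur)))^2 *
              (norm (Fres Lam r D (grad x) x))^2"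
        unfolding a_def b1_def mu_def .
    qed
  qed
qed

end
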